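(* Let $r$ be a prime power, $q=r^2$, and let $M$ be a positive integer with $M\mid (r+1)$. Then there exists a matrix $A\in M_{M,M}(\mathbb{F}_q)$ such that $AA^\dagger$ is diagonal (indeed $AA^\dagger=MI_M$ with $M\neq 0$ in $\mathbb{F}_q$) and $\delta_i(A)=M-i+1$ for all $1\le i\le M$.
   Context: For $a\in\mathbb{F}_q$, $\overline{a}:=a^r$; for a matrix $A=[a_{ij}]$, $A^\dagger:=[\overline{a_{ji}}]$. For $A\in M_{s,l}(\mathbb{F}_q)$ and $1\le i\le s$, $\delta_i(A)$ denotes the minimum Hamming weight of the linear code of length $l$ over $\mathbb{F}_q$ generated by the first $i$ rows of $A$. *)

theory Defs
  imports "HOL-Computational_Algebra.Primes"
begin

text \<open>Matrices over a field are represented as functions nat => nat => 'a,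
  only the entries with indices below the stated dimensions being relevant.
  Vectors of length l are functions nat => 'a that vanish at indices >= l.\<close>

definition prime_power :: "nat \<Rightarrow> bool" where
  "prime_power r \<longleftrightarrow> (\<exists>p k. prime p \<and> k > 0 \<and> r = p ^ k)"

definition conjg :: "nat \<Rightarrow> 'a::field \<Rightarrow> 'a" where
  "conjg r a = a ^ r"

definition dagger :: "nat \<Rightarrow> (nat \<Rightarrow> nat \<Rightarrow> 'a::field) \<Rightarrow> (nat \<Rightarrow> nat \<Rightarrow> 'a)" where
  "dagger r A = (\<lambda>i j. conjg r (A j i))"

definition mat_mult :: "nat \<Rightarrow> (nat \<Rightarrow> nat \<Rightarrow> 'a::field) \<Rightarrow> (nat \<Rightarrow> nat \<Rightarrow> 'a) \<Rightarrow> (nat \<Rightarrow> nat \<Rightarrow> 'a)" where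
  "mat_mult n A B = (\<lambda>i j. \<Sum>k<n. A i k * B k j)"

definition row_code :: "(nat \<Rightarrow> nat \<Rightarrow> 'a::field) \<Rightarrow> nat \<Rightarrow> nat \<Rightarrow> (nat \<Rightarrow> 'a) set" where
  "row_code A i l = {v. \<exists>c. v = (\<lambda>j. if j < l then (\<Sum>k<i. c k * A k j) else 0)}"

definition hweight :: "nat \<Rightarrow> (nat \<Rightarrow> 'a::zero) \<Rightarrow> nat" where
  "hweight l v = card {j. j < l \<and> v j \<noteq> 0}"

text \<open>minimum Hamming weight of the code (Inf {} = 0 on nat for the zero code)\<close>
definition delta :: "(nat \<Rightarrow> nat \<Rightarrow> 'a::field) \<Rightarrow> nat \<Rightarrow> nat \<Rightarrow> nat" where
  "delta A l i = Inf (hweight l ` (row_code A i l - {\<lambda>_. 0}))"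

end

theory Submission imports Defs "HOL-Number_Theory.Residues" "HOL-Computational_Algebra.Polynomial"
begin

definition tring :: "'a::field ring" where
  "tring = \<lparr>carrier = UNIV, monoid.mult = (\<lambda>x y. x * y), one = 1, ring.zero = 0, add = (\<lambda>x y. x + y)\<rparr>"

lemma tring_field: "field (tring :: 'a::field ring)"
proof -
  have "\<exists>y. x + y = 0" for x :: 'a
    using add.right_inverse by blast
  moreover have "x \<noteq> 0 \<Longrightarrow> \<exists>y. x * y = 1" for x :: 'a
    by (rule exI[of _ "inverse x"]) auto
  ultimately show ?thesis
    unfolding tring_def
    by unfold_locales (auto simp: algebra_simps Units_def)
qed

lemma gen_exists:
  "\<exists>a::'a::{finite,field}. a \<noteq> 0 \<and> (\<forall>x. x \<noteq> 0 \<longrightarrow> (\<exists>i. x = a ^ i))"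
proof -
  let ?R = "tring :: 'a ring"
  interpret field ?R by (rule tring_field)
  have pw: "x [^]\<^bsub>?R\<^esub> (i::nat) = x ^ i" for x :: 'a and i :: nat
    by (induct i) (simp_all add: tring_def)
  have fin: "finite (carrier ?R)" by simp
  from finite_field_mult_group_has_gen[OF fin] obtain a where
    a: "a \<in> carrier (mult_of ?R)" "carrier (mult_of ?R) = {a[^]\<^bsub>?R\<^esub>i | i::nat . i \<in> UNIV}"
    by blast
  have cm: "carrier (mult_of ?R) = UNIV - {0}"
    by (simp add: tring_def)
  have "a \<noteq> 0" using a(1) by (simp add: tring_def)
  moreover have "\<exists>i. x = a ^ i" if "x \<noteq> 0" for x
  proof -
    have "x \<in> carrier (mult_of ?R)" using that cm by simp
    then obtain i :: nat where "x = a [^]\<^bsub>?R\<^esub> i" using a(2) by auto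
    then show ?thesis using pw by metis
  qed
  ultimately show ?thesis by blast
qed

lemma root_exists:
  fixes M :: nat
  assumes "M > 0" "M dvd card (UNIV::'a::{finite,field} set) - 1"
  shows "\<exists>w::'a. w ^ M = 1 \<and> (\<forall>k. 0 < k \<and> k < M \<longrightarrow> w ^ k \<noteq> 1)"
proof -
  obtain a :: 'a where a0: "a \<noteq> 0" and ag: "\<And>x. x \<noteq> 0 \<Longrightarrow> \<exists>i. x = a ^ i"
    using gen_exists by blast
  have "\<exists>n>0. a ^ n = 1"
  proof -
    have "\<not> inj (\<lambda>i::nat. a ^ i)"
    proof
      assume "inj (\<lambda>i::nat. a ^ i)"
      then have "infinite (range (\<lambda>i::nat. a ^ i))"
        using finite_imageD infinite_UNIV_nat by blast
      then show False by simp
    qed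
    then obtain i j :: nat where ij: "a ^ i = a ^ j" "i \<noteq> j" unfolding inj_def by blast
    { fix i j :: nat assume "a ^ i = a ^ j" "i < j"
      then have "a ^ i * a ^ (j - i) = a ^ i * 1" by (metis power_add le_add_diff_inverse less_imp_le mult_1_right)
      then have "a ^ (j - i) = 1" using a0 by simp
      then have "\<exists>n>0. a ^ n = 1" using \<open>i < j\<close> by (intro exI[of _ "j - i"]) simp }
    note * = this
    show ?thesis using ij *[of i j] *[of j i] by (cases "i < j") auto
  qed
  define n where "n = (LEAST n. n > 0 \<and> a ^ n = 1)"
  have n: "n > 0" "a ^ n = 1" using LeastI_ex[OF \<open>\<exists>n>0. a ^ n = 1\<close>] unfolding n_def by auto
  have nmin: "a ^ k \<noteq> 1" if "0 < k" "k < n" for k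
    using not_less_Least[of k "\<lambda>n. n > 0 \<and> a ^ n = 1"] that unfolding n_def by auto
  have pmod: "a ^ i = a ^ (i mod n)" for i
  proof -
    have "a ^ i = a ^ (n * (i div n) + i mod n)" by simp
    also have "\<dots> = a ^ (i mod n)" by (simp only: power_add power_mult n(2)) simp
    finally show ?thesis .
  qed
  have "UNIV - {0} \<subseteq> (\<lambda>i. a ^ i) ` {..<n}"
  proof
    fix x :: 'a assume "x \<in> UNIV - {0}"
    then obtain i where "x = a ^ i" using ag by auto
    then have "x = a ^ (i mod n)" using pmod by simp
    then show "x \<in> (\<lambda>i. a ^ i) ` {..<n}" using n(1) by auto
  qed
  then have c1: "card (UNIV - {0::'a}) \<le> n"
    by (metis card_image_le card_lessThan card_mono dual_order.trans finite_imageI finite_lessThan)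
  have inj: "inj_on (\<lambda>i. a ^ i) {..<n}"
  proof (rule inj_onI)
    fix i j assume ij: "i \<in> {..<n}" "j \<in> {..<n}" "a ^ i = a ^ j"
    { fix i j :: nat assume "a ^ i = a ^ j" "i < j" "j < n"
      then have "a ^ i * a ^ (j - i) = a ^ i * 1" by (metis power_add le_add_diff_inverse less_imp_le mult_1_right)
      then have "a ^ (j - i) = 1" using a0 by simp
      then have False using nmin[of "j - i"] \<open>i < j\<close> \<open>j < n\<close> by simp }
    then show "i = j" using ij by (metis linorder_neqE_nat lessThan_iff)
  qed
  have "(\<lambda>i. a ^ i) ` {..<n} \<subseteq> UNIV - {0}" using a0 by auto
  then have "card ((\<lambda>i. a ^ i) ` {..<n}) \<le> card (UNIV - {0::'a})"
    by (intro card_mono) auto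
  then have "n \<le> card (UNIV - {0::'a})" using card_image[OF inj] by simp
  with c1 have nq: "n = card (UNIV::'a set) - 1" by (simp add: card_Diff_singleton)
  obtain d where d: "card (UNIV::'a set) - 1 = M * d" using assms(2) by blast
  define w where "w = a ^ d"
  have "w ^ M = 1" unfolding w_def using n(2) nq d by (simp add: power_mult[symmetric] mult.commute)
  moreover have "w ^ k \<noteq> 1" if "0 < k" "k < M" for k
  proof -
    have dp: "d > 0" using n(1) nq d by (cases d) auto
    have "w ^ k = a ^ (k * d)" unfolding w_def by (simp add: power_mult[symmetric] mult.commute)
    moreover have "k * d < n" using that dp nq d by simp
    moreover have "0 < k * d" using that dp by simp
    ultimately show ?thesis using nmin by simp
  qed
  ultimately show ?thesis by blast
qed

lemma M_nonzero:
  fixes r M :: nat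
  assumes "prime_power r"
    and "card (UNIV :: 'a::{finite,field} set) = r ^ 2"
    and "M dvd (r + 1)"
  shows "(of_nat M :: 'a) \<noteq> 0"
proof
  assume M0: "(of_nat M :: 'a) = 0"
  obtain p k where pk: "prime p" "k > 0" "r = p ^ k" using assms(1) unfolding prime_power_def by blast
  have cp: "CHAR('a) > 0" by (rule finite_imp_CHAR_pos) simp
  have cpr: "prime CHAR('a)" using prime_CHAR_semidom[OF cp] .
  have "CHAR('a) dvd card (UNIV :: 'a set)" by (rule CHAR_dvd_CARD)
  then have "CHAR('a) dvd p ^ (2 * k)" using assms(2) pk by (simp add: power_mult[symmetric] mult.commute)
  then have "CHAR('a) dvd p" using cpr prime_dvd_power by blast
  then have "CHAR('a) dvd r" using pk by (simp add: dvd_power_iff_le dvd_trans[OF _ dvd_power[of k p]])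
  moreover have "CHAR('a) dvd M" using M0 of_nat_eq_0_iff_char_dvd by blast
  then have "CHAR('a) dvd r + 1" using assms(3) dvd_trans by blast
  ultimately have "CHAR('a) dvd 1" by (metis dvd_add_right_iff)
  then show False using cpr by simp
qed

lemma poly_lt:
  fixes P :: "'a::comm_ring_1 poly"
  assumes "degree P < i"
  shows "poly P x = (\<Sum>k<i. coeff P k * x ^ k)"
proof -
  have "poly P x = (\<Sum>k\<le>degree P. coeff P k * x ^ k)" by (rule poly_altdef)
  also have "\<dots> = (\<Sum>k<i. coeff P k * x ^ k)"
    using assms by (intro sum.mono_neutral_left) (auto simp: coeff_eq_0)
  finally show ?thesis .
qed

theorem lemma4p2:
  fixes r M :: nat
  assumes "prime_power r"
    and "card (UNIV :: 'a::{finite,field} set) = r ^ 2"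
    and "M > 0" and "M dvd (r + 1)"
  shows "\<exists>A :: nat \<Rightarrow> nat \<Rightarrow> 'a.
           (\<forall>i<M. \<forall>j<M. mat_mult M A (dagger r A) i j = (if i = j then of_nat M else 0))
         \<and> (of_nat M :: 'a) \<noteq> 0
         \<and> (\<forall>i. 1 \<le> i \<and> i \<le> M \<longrightarrow> delta A M i = M - i + 1)"
proof -
  have r1: "r \<ge> 1" using assms(1) unfolding prime_power_def
    by (metis One_nat_def Suc_leI not_prime_0 power_eq_0_iff zero_less_iff_neq_zero)
  have "r ^ 2 - 1 = (r + 1) * (r - 1)" using r1
    by (simp add: power2_eq_square algebra_simps diff_mult_distrib2)
  then have "M dvd card (UNIV :: 'a set) - 1" using assms(2,4) by (metis dvd_mult2)
  then obtain w :: 'a where w1: "w ^ M = 1" and wk: "\<And>k. 0 < k \<Longrightarrow> k < M \<Longrightarrow> w ^ k \<noteq> 1"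
    using root_exists[OF assms(3)] by blast
  have w0: "w \<noteq> 0" using w1 assms(3) by (cases M) auto
  have winj: "i = j" if "i < M" "j < M" "w ^ i = w ^ j" for i j
  proof (rule ccontr)
    assume "i \<noteq> j"
    { fix i j :: nat assume "w ^ i = w ^ j" "i < j" "j < M"
      then have "w ^ i * w ^ (j - i) = w ^ i * 1" by (metis power_add le_add_diff_inverse less_imp_le mult_1_right)
      then have "w ^ (j - i) = 1" using w0 by simp
      then have False using wk[of "j - i"] \<open>i < j\<close> \<open>j < M\<close> by simp }
    then show False using that \<open>i \<noteq> j\<close> by (metis linorder_neqE_nat)
  qed
  obtain t where t: "r + 1 = M * t" using assms(4) by blast
  have wr: "x ^ r * x = 1" if "x ^ M = 1" for x :: 'a
  proof -
    have "x ^ r * x = x ^ (r + 1)" by simp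
    also have "\<dots> = (x ^ M) ^ t" by (simp only: t power_mult)
    finally show ?thesis using that by simp
  qed
  define A where "A = (\<lambda>i j. w ^ (i * j))"
  have orth: "mat_mult M A (dagger r A) i j = (if i = j then of_nat M else 0)" if "i < M" "j < M" for i j
  proof -
    define z where "z = w ^ i * (w ^ j) ^ r"
    have "mat_mult M A (dagger r A) i j = (\<Sum>k<M. z ^ k)"
      unfolding mat_mult_def dagger_def conjg_def A_def z_def
      by (intro sum.cong refl) (simp add: power_mult_distrib power_mult[symmetric] ac_simps)
    also have "\<dots> = (if i = j then of_nat M else 0)"
    proof (cases "i = j")
      case True
      have "(w ^ i) ^ M = 1" by (simp add: power_mult[symmetric] mult.commute) (simp add: power_mult w1)
      then have "z = 1" unfolding z_def True using wr[of "w ^ j"] True by (simp add: mult.commute)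
      then show ?thesis using True by (simp add: sum_gp_strict)
    next
      case False
      have zM: "z ^ M = 1" unfolding z_def
        by (simp add: power_mult_distrib power_mult[symmetric] ac_simps) (simp add: power_mult w1)
      have "z \<noteq> 1"
      proof
        assume "z = 1"
        then have "w ^ i * ((w ^ j) ^ r * w ^ j) = w ^ j" unfolding z_def by (metis mult.assoc mult_1_left)
        moreover have "(w ^ j) ^ M = 1" by (simp add: power_mult[symmetric] mult.commute) (simp add: power_mult w1)
        ultimately have "w ^ i = w ^ j" using wr by simp
        then show False using winj that False by blast
      qed
      then show ?thesis using False zM by (simp add: sum_gp_strict)
    qed
    finally show ?thesis .
  qed
  have Mnz: "(of_nat M :: 'a) \<noteq> 0" using M_nonzero[OF assms(1,2,4)] .
  have del: "delta A M i = M - i + 1" if i: "1 \<le> i" "i \<le> M" for i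
  proof -
    let ?S = "hweight M ` (row_code A i M - {\<lambda>_. 0})"
    have Akj: "A k j = (w ^ j) ^ k" for k j unfolding A_def by (simp add: power_mult[symmetric] mult.commute)
    have lower: "M - i + 1 \<le> x" if "x \<in> ?S" for x
    proof -
      obtain v where v: "v \<in> row_code A i M" "v \<noteq> (\<lambda>_. 0)" "x = hweight M v" using \<open>x \<in> ?S\<close> by blast
      obtain c where c: "v = (\<lambda>j. if j < M then (\<Sum>k<i. c k * A k j) else 0)"
        using v(1) unfolding row_code_def by blast
      define P where "P = (\<Sum>k<i. monom (c k) k)"
      have pP: "poly P y = (\<Sum>k<i. c k * y ^ k)" for y unfolding P_def by (simp add: poly_sum poly_monom)
      have vP: "v j = (if j < M then poly P (w ^ j) else 0)" for j unfolding c pP Akj by simp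
      have P0: "P \<noteq> 0"
      proof
        assume "P = 0" then have "v = (\<lambda>_. 0)" using vP by (auto simp: fun_eq_iff)
        with v(2) show False by simp
      qed
      have dP: "degree P \<le> i - 1" unfolding P_def
        by (rule degree_sum_le) (auto intro: order.trans[OF degree_monom_le])
      define Z where "Z = {j. j < M \<and> v j = 0}"
      have "(\<lambda>j. w ^ j) ` Z \<subseteq> {y. poly P y = 0}" unfolding Z_def using vP by auto
      moreover have "inj_on (\<lambda>j. w ^ j) Z" unfolding Z_def using winj by (auto intro: inj_onI)
      ultimately have "card Z \<le> card {y. poly P y = 0}"
        using poly_roots_finite[OF P0] by (metis card_image card_mono)
      also have "\<dots> \<le> degree P" by (rule card_poly_roots_bound[OF P0])
      finally have cZ: "card Z \<le> i - 1" using dP by simp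
      have "{j. j < M \<and> v j \<noteq> 0} = {..<M} - Z" unfolding Z_def by auto
      then have "hweight M v = M - card Z" unfolding hweight_def
        by (simp add: card_Diff_subset Z_def subset_eq)
      then show ?thesis using v(3) cZ i by simp
    qed
    define P :: "'a poly" where "P = (\<Prod>k\<in>{1..<i}. [:- (w ^ k), 1:])"
    have "degree P \<le> sum (degree \<circ> (\<lambda>k. [:- (w ^ k), 1:])) {1..<i}"
      unfolding P_def by (rule degree_prod_sum_le) simp
    also have "\<dots> = i - 1" by simp
    finally have dP: "degree P < i" using i by simp
    define v where "v = (\<lambda>j. if j < M then (\<Sum>k<i. coeff P k * A k j) else 0)"
    have vr: "v \<in> row_code A i M" unfolding row_code_def v_def by blast
    have vP: "v j = (if j < M then poly P (w ^ j) else 0)" for j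
      unfolding v_def Akj using poly_lt[OF dP] by simp
    have roots: "poly P (w ^ j) = 0 \<longleftrightarrow> j \<in> {1..<i}" if "j < M" for j
    proof -
      have "poly P (w ^ j) = (\<Prod>k\<in>{1..<i}. w ^ j - w ^ k)" unfolding P_def by (simp add: poly_prod)
      then have "poly P (w ^ j) = 0 \<longleftrightarrow> (\<exists>k\<in>{1..<i}. w ^ j = w ^ k)" by simp
      also have "\<dots> \<longleftrightarrow> j \<in> {1..<i}"
      proof
        assume "\<exists>k\<in>{1..<i}. w ^ j = w ^ k"
        then obtain k where k: "k \<in> {1..<i}" "w ^ j = w ^ k" by blast
        then have "j = k" using winj[OF that, of k] i by auto
        then show "j \<in> {1..<i}" using k by simp
      qed blast
      finally show ?thesis .
    qed
    have nz: "{j. j < M \<and> v j \<noteq> 0} = {..<M} - {1..<i}" using vP roots i by auto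
    have "card ({..<M} - {1..<i}) = M - (i - 1)"
      using i by (subst card_Diff_subset) auto
    then have hw: "hweight M v = M - i + 1" unfolding hweight_def nz using i by simp
    have "v 0 \<noteq> 0" using vP[of 0] roots[of 0] assms(3) by (simp del: power_0)
    then have "v \<noteq> (\<lambda>_. 0)" by auto
    then have "M - i + 1 \<in> ?S" using vr hw by (metis DiffI image_eqI singletonD)
    then show ?thesis unfolding delta_def by (intro cInf_eq_minimum lower)
  qed
  show ?thesis using orth Mnz del by blast
qed

end
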